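(* Let $\epsilon>0$, $\beta\ge 0$, let $M\ge 4$ be an even integer and $N\ge 3$ an integer, and let $\mathcal A$ be the upwind Shishkin-mesh matrix described in the context. Then all nonzero $(N-1)\times(N-1)$ blocks of $\mathcal A$ (namely $A_H,A,A_h,B_H,B,B_h,C_H,C,C_h$) are nonsingular. Moreover, with respect to the matrix $\infty$-norm, \[ \|A_H^{-1}B_H\|_\infty+\|A_H^{-1}C_H\|_\infty\le 1,\quad \|A^{-1}B\|_\infty+\|A^{-1}C\|_\infty\le 1,\quad \|A_h^{-1}B_h\|_\infty+\|A_h^{-1}C_h\|_\infty\le 1, \] and \[ \|B_HA_H^{-1}\|_\infty+\|C_HA_H^{-1}\|_\infty\le 1,\quad \|B_hA_h^{-1}\|_\infty+\|C_hA_h^{-1}\|_\infty\le 1. \]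
   Context: Setting (upwind finite differences on a Shishkin mesh for $-\epsilon\Delta u+u_y+\beta u=f$ on $(0,1)^2$ with Dirichlet data, lexicographic line ordering): let $\tau_y=\min\{1/2,\,2\epsilon\ln M\}$, $H_x=1/N$, $H_y=2(1-\tau_y)/M$, $h_y=2\tau_y/M$, and $m=M/2-1$. Define the scalars $d_H=-\frac{\epsilon}{H_y^2}-\frac1{H_y}$, $d=-\frac{2\epsilon}{H_y(H_y+h_y)}-\frac1{H_y}$, $d_h=-\frac{\epsilon}{h_y^2}-\frac1{h_y}$, $e_H=-\frac{\epsilon}{H_y^2}$, $e=-\frac{2\epsilon}{h_y(H_y+h_y)}$, $e_h=-\frac{\epsilon}{h_y^2}$, and $a_H=\frac{2\epsilon}{H_x^2}+\frac{2\epsilon}{H_y^2}+\frac1{H_y}+\beta$, $a=\frac{2\epsilon}{H_x^2}+\frac{2\epsilon}{H_yh_y}+\frac1{H_y}+\beta$, $a_h=\frac{2\epsilon}{H_x^2}+\frac{2\epsilon}{h_y^2}+\frac1{h_y}+\beta$. With $I$ the identity of size $N-1$, let $C_H=d_HI$, $C=dI$, $C_h=d_hI$, $B_H=e_HI$, $B=eI$, $B_h=e_hI$, and let $A_H$, $A$, $A_h$ be the $(N-1)\times(N-1)$ tridiagonal Toeplitz matrices with off-diagonal entries $-\epsilon/H_x^2$ (both sub- and superdiagonal) and diagonal entries $a_H$, $a$, $a_h$, respectively. Let $\hat A_H$ (resp. $\hat A_h$) be the $m\times m$ block tridiagonal matrix with diagonal blocks $A_H$ (resp. $A_h$), subdiagonal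 blocks $C_H$ (resp. $C_h$) and superdiagonal blocks $B_H$ (resp. $B_h$). Then $\mathcal A=\begin{bmatrix}\hat A_H & e_m\otimes B_H & 0\\ e_m^{T}\otimes C & A & e_1^{T}\otimes B\\ 0 & e_1\otimes C_h & \hat A_h\end{bmatrix}$ of size $(N-1)(M-1)$, where $e_1,e_m$ are the first and last canonical basis vectors of $\mathbb R^m$ and $\otimes$ is the Kronecker product. *)

theory Defs
  imports "Jordan_Normal_Form.Matrix"
begin

definition tau_y :: "real \<Rightarrow> nat \<Rightarrow> real" where
  "tau_y \<epsilon> M = min (1/2) (2 * \<epsilon> * ln (real M))"
definition H_x :: "nat \<Rightarrow> real" where "H_x N = 1 / real N"
definition H_y :: "real \<Rightarrow> nat \<Rightarrow> real" where "H_y \<epsilon> M = 2 * (1 - tau_y \<epsilon> M) / real M"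
definition h_y :: "real \<Rightarrow> nat \<Rightarrow> real" where "h_y \<epsilon> M = 2 * tau_y \<epsilon> M / real M"

definition dH :: "real \<Rightarrow> nat \<Rightarrow> real" where
  "dH \<epsilon> M = - \<epsilon> / (H_y \<epsilon> M)^2 - 1 / H_y \<epsilon> M"
definition dd :: "real \<Rightarrow> nat \<Rightarrow> real" where
  "dd \<epsilon> M = - 2 * \<epsilon> / (H_y \<epsilon> M * (H_y \<epsilon> M + h_y \<epsilon> M)) - 1 / H_y \<epsilon> M"
definition dh :: "real \<Rightarrow> nat \<Rightarrow> real" where
  "dh \<epsilon> M = - \<epsilon> / (h_y \<epsilon> M)^2 - 1 / h_y \<epsilon> M"
definition eH :: "real \<Rightarrow> nat \<Rightarrow> real" where
  "eH \<epsilon> M = - \<epsilon> / (H_y \<epsilon> M)^2"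
definition ee :: "real \<Rightarrow> nat \<Rightarrow> real" where
  "ee \<epsilon> M = - 2 * \<epsilon> / (h_y \<epsilon> M * (H_y \<epsilon> M + h_y \<epsilon> M))"
definition eh :: "real \<Rightarrow> nat \<Rightarrow> real" where
  "eh \<epsilon> M = - \<epsilon> / (h_y \<epsilon> M)^2"
definition aH :: "real \<Rightarrow> real \<Rightarrow> nat \<Rightarrow> nat \<Rightarrow> real" where
  "aH \<epsilon> \<beta> M N = 2 * \<epsilon> / (H_x N)^2 + 2 * \<epsilon> / (H_y \<epsilon> M)^2 + 1 / H_y \<epsilon> M + \<beta>"
definition aa :: "real \<Rightarrow> real \<Rightarrow> nat \<Rightarrow> nat \<Rightarrow> real" where
  "aa \<epsilon> \<beta> M N = 2 * \<epsilon> / (H_x N)^2 + 2 * \<epsilon> / (H_y \<epsilon> M * h_y \<epsilon> M) + 1 / H_y \<epsilon> M + \<beta>"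
definition ah :: "real \<Rightarrow> real \<Rightarrow> nat \<Rightarrow> nat \<Rightarrow> real" where
  "ah \<epsilon> \<beta> M N = 2 * \<epsilon> / (H_x N)^2 + 2 * \<epsilon> / (h_y \<epsilon> M)^2 + 1 / h_y \<epsilon> M + \<beta>"

definition tridiag_toeplitz :: "nat \<Rightarrow> real \<Rightarrow> real \<Rightarrow> real mat" where
  "tridiag_toeplitz n a b = mat n n (\<lambda>(i, j). if i = j then a else if i = j + 1 \<or> j = i + 1 then b else 0)"

definition blkA_H :: "real \<Rightarrow> real \<Rightarrow> nat \<Rightarrow> nat \<Rightarrow> real mat" where
  "blkA_H \<epsilon> \<beta> M N = tridiag_toeplitz (N - 1) (aH \<epsilon> \<beta> M N) (- \<epsilon> / (H_x N)^2)"
definition blkA :: "real \<Rightarrow> real \<Rightarrow> nat \<Rightarrow> nat \<Rightarrow> real mat" where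
  "blkA \<epsilon> \<beta> M N = tridiag_toeplitz (N - 1) (aa \<epsilon> \<beta> M N) (- \<epsilon> / (H_x N)^2)"
definition blkA_h :: "real \<Rightarrow> real \<Rightarrow> nat \<Rightarrow> nat \<Rightarrow> real mat" where
  "blkA_h \<epsilon> \<beta> M N = tridiag_toeplitz (N - 1) (ah \<epsilon> \<beta> M N) (- \<epsilon> / (H_x N)^2)"
definition blkB_H :: "real \<Rightarrow> nat \<Rightarrow> nat \<Rightarrow> real mat" where
  "blkB_H \<epsilon> M N = eH \<epsilon> M \<cdot>\<^sub>m 1\<^sub>m (N - 1)"
definition blkB :: "real \<Rightarrow> nat \<Rightarrow> nat \<Rightarrow> real mat" where
  "blkB \<epsilon> M N = ee \<epsilon> M \<cdot>\<^sub>m 1\<^sub>m (N - 1)"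
definition blkB_h :: "real \<Rightarrow> nat \<Rightarrow> nat \<Rightarrow> real mat" where
  "blkB_h \<epsilon> M N = eh \<epsilon> M \<cdot>\<^sub>m 1\<^sub>m (N - 1)"
definition blkC_H :: "real \<Rightarrow> nat \<Rightarrow> nat \<Rightarrow> real mat" where
  "blkC_H \<epsilon> M N = dH \<epsilon> M \<cdot>\<^sub>m 1\<^sub>m (N - 1)"
definition blkC :: "real \<Rightarrow> nat \<Rightarrow> nat \<Rightarrow> real mat" where
  "blkC \<epsilon> M N = dd \<epsilon> M \<cdot>\<^sub>m 1\<^sub>m (N - 1)"
definition blkC_h :: "real \<Rightarrow> nat \<Rightarrow> nat \<Rightarrow> real mat" where
  "blkC_h \<epsilon> M N = dh \<epsilon> M \<cdot>\<^sub>m 1\<^sub>m (N - 1)"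

definition mat_inv :: "real mat \<Rightarrow> real mat" where
  "mat_inv A = (SOME B. inverts_mat A B \<and> inverts_mat B A)"

definition norm_inf :: "real mat \<Rightarrow> real" where
  "norm_inf A = Max ((\<lambda>i. \<Sum>j<dim_col A. \<bar>A $$ (i, j)\<bar>) ` {..<dim_row A})"

end

theory Submission
  imports Defs "Jordan_Normal_Form.Determinant"
begin

lemma sdd_row:
  fixes A :: "real mat"
  assumes A: "A \<in> carrier_mat n n"
    and d: "\<forall>i<n. \<delta> \<le> \<bar>A$$(i,i)\<bar> - (\<Sum>j\<in>{..<n}-{i}. \<bar>A$$(i,j)\<bar>)"
    and z: "z \<in> carrier_vec n" and i: "i<n" and mx: "\<forall>k<n. \<bar>z$k\<bar> \<le> \<bar>z$i\<bar>"
  shows "\<delta> * \<bar>z$i\<bar> \<le> \<bar>(A *\<^sub>v z)$i\<bar>"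
proof -
  have "(A *\<^sub>v z)$i = (\<Sum>j\<in>{..<n}. A$$(i,j) * z$j)"
    using A z i by (simp add: scalar_prod_def lessThan_atLeast0)
  also have "\<dots> = A$$(i,i)*z$i + (\<Sum>j\<in>{..<n}-{i}. A$$(i,j)*z$j)"
    using i by (simp add: sum.remove)
  finally have e: "(A *\<^sub>v z)$i = A$$(i,i)*z$i + (\<Sum>j\<in>{..<n}-{i}. A$$(i,j)*z$j)" .
  have "\<bar>\<Sum>j\<in>{..<n}-{i}. A$$(i,j)*z$j\<bar> \<le> (\<Sum>j\<in>{..<n}-{i}. \<bar>A$$(i,j)*z$j\<bar>)"
    by (rule sum_abs)
  also have "\<dots> \<le> (\<Sum>j\<in>{..<n}-{i}. \<bar>A$$(i,j)\<bar>*\<bar>z$i\<bar>)"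
    by (rule sum_mono) (use mx in \<open>auto simp: abs_mult intro: mult_left_mono\<close>)
  also have "\<dots> = (\<Sum>j\<in>{..<n}-{i}. \<bar>A$$(i,j)\<bar>)*\<bar>z$i\<bar>"
    by (simp add: sum_distrib_right)
  finally have s: "\<bar>\<Sum>j\<in>{..<n}-{i}. A$$(i,j)*z$j\<bar> \<le> (\<Sum>j\<in>{..<n}-{i}. \<bar>A$$(i,j)\<bar>)*\<bar>z$i\<bar>" .
  have "\<delta> * \<bar>z$i\<bar> \<le> (\<bar>A$$(i,i)\<bar> - (\<Sum>j\<in>{..<n}-{i}. \<bar>A$$(i,j)\<bar>)) * \<bar>z$i\<bar>"
    using d i by (intro mult_right_mono) auto
  also have "\<dots> = \<bar>A$$(i,i)*z$i\<bar> - (\<Sum>j\<in>{..<n}-{i}. \<bar>A$$(i,j)\<bar>)*\<bar>z$i\<bar>"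
    by (simp add: algebra_simps abs_mult)
  also have "\<dots> \<le> \<bar>(A *\<^sub>v z)$i\<bar>" unfolding e using s by linarith
  finally show ?thesis .
qed

lemma exists_max_idx:
  fixes z :: "real vec"
  assumes "0 < n"
  obtains i where "i < n" "\<forall>k<n. \<bar>z$k\<bar> \<le> \<bar>z$i\<bar>"
proof -
  let ?S = "(\<lambda>k. \<bar>z$k\<bar>) ` {..<n}"
  have "Max ?S \<in> ?S" using assms by (intro Max_in) auto
  then obtain i where i: "i < n" "Max ?S = \<bar>z$i\<bar>" by auto
  have "\<forall>k<n. \<bar>z$k\<bar> \<le> \<bar>z$i\<bar>" using i(2)[symmetric] by auto
  with i(1) show ?thesis using that by blast
qed

lemma sdd_bound:
  fixes A :: "real mat"
  assumes A: "A \<in> carrier_mat n n" and dp: "\<delta> > 0"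
    and d: "\<forall>i<n. \<delta> \<le> \<bar>A$$(i,i)\<bar> - (\<Sum>j\<in>{..<n}-{i}. \<bar>A$$(i,j)\<bar>)"
    and z: "z \<in> carrier_vec n" and b: "\<forall>i<n. \<bar>(A *\<^sub>v z)$i\<bar> \<le> c"
    and k: "k < n"
  shows "\<bar>z$k\<bar> \<le> c / \<delta>"
proof -
  obtain i where i: "i < n" "\<forall>k<n. \<bar>z$k\<bar> \<le> \<bar>z$i\<bar>" using exists_max_idx[of n z] k by auto
  have "\<delta> * \<bar>z$i\<bar> \<le> c" using sdd_row[OF A d z i(1) i(2)] b i(1) by fastforce
  hence "\<bar>z$i\<bar> \<le> c / \<delta>" using dp by (simp add: field_simps)
  thus ?thesis using i k by fastforce
qed

lemma sdd_invertible:
  fixes A :: "real mat"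
  assumes A: "A \<in> carrier_mat n n" and dp: "\<delta> > 0"
    and d: "\<forall>i<n. \<delta> \<le> \<bar>A$$(i,i)\<bar> - (\<Sum>j\<in>{..<n}-{i}. \<bar>A$$(i,j)\<bar>)"
  shows "invertible_mat A"
proof -
  have "det A \<noteq> 0"
  proof
    assume "det A = 0"
    then obtain v where v: "v \<in> carrier_vec n" "v \<noteq> 0\<^sub>v n" "A *\<^sub>v v = 0\<^sub>v n"
      using det_0_iff_vec_prod_zero_field[OF A] by auto
    have "\<forall>k<n. \<bar>v$k\<bar> \<le> 0 / \<delta>"
    proof (intro allI impI)
      fix k assume k: "k < n"
      show "\<bar>v$k\<bar> \<le> 0 / \<delta>"
        by (rule sdd_bound[OF A dp d v(1) _ k]) (use v(3) A in auto)
    qed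
    hence "v = 0\<^sub>v n" using v(1) by (intro eq_vecI) auto
    with v(2) show False by simp
  qed
  from det_non_zero_imp_unit[OF A this, of "()"]
  obtain B where B: "B \<in> carrier_mat n n" "A * B = 1\<^sub>m n" "B * A = 1\<^sub>m n"
    unfolding Units_def ring_mat_def by auto
  show ?thesis unfolding invertible_mat_def inverts_mat_def using A B by auto
qed

lemma mat_inv_props:
  fixes A :: "real mat"
  assumes A: "A \<in> carrier_mat n n" and inv: "invertible_mat A"
  shows "mat_inv A \<in> carrier_mat n n" "A * mat_inv A = 1\<^sub>m n" "mat_inv A * A = 1\<^sub>m n"
proof -
  have ex: "\<exists>B. inverts_mat A B \<and> inverts_mat B A" using inv unfolding invertible_mat_def by auto
  have h: "inverts_mat A (mat_inv A) \<and> inverts_mat (mat_inv A) A"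
    unfolding mat_inv_def by (rule someI_ex[OF ex])
  hence 1: "A * mat_inv A = 1\<^sub>m n" and 2: "mat_inv A * A = 1\<^sub>m (dim_row (mat_inv A))"
    using A unfolding inverts_mat_def by auto
  have c: "dim_col (mat_inv A) = n" using arg_cong[OF 1, of dim_col] by simp
  have r: "dim_row (mat_inv A) = n" using arg_cong[OF 2, of dim_col] A by simp
  show "mat_inv A \<in> carrier_mat n n" using c r by auto
  show "A * mat_inv A = 1\<^sub>m n" by fact
  show "mat_inv A * A = 1\<^sub>m n" using 2 r by simp
qed

lemma sdd_inv_rowsum:
  fixes A :: "real mat"
  assumes A: "A \<in> carrier_mat n n" and dp: "\<delta> > 0"
    and d: "\<forall>i<n. \<delta> \<le> \<bar>A$$(i,i)\<bar> - (\<Sum>j\<in>{..<n}-{i}. \<bar>A$$(i,j)\<bar>)"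
    and i: "i < n"
  shows "(\<Sum>j<n. \<bar>mat_inv A $$ (i,j)\<bar>) \<le> 1 / \<delta>"
proof -
  have inv: "invertible_mat A" by (rule sdd_invertible[OF A dp d])
  note P = mat_inv_props[OF A inv]
  define B where "B = mat_inv A"
  have Bc: "B \<in> carrier_mat n n" using P B_def by simp
  define x where "x = vec n (\<lambda>j. sgn (B $$ (i,j)))"
  have xc: "x \<in> carrier_vec n" unfolding x_def by simp
  define z where "z = B *\<^sub>v x"
  have zc: "z \<in> carrier_vec n" unfolding z_def using Bc xc by simp
  have "A *\<^sub>v z = (A * B) *\<^sub>v x" unfolding z_def
    using assoc_mult_mat_vec[OF A Bc xc] by simp
  hence Az: "A *\<^sub>v z = x" using P(2) B_def xc by simp
  have "\<forall>k<n. \<bar>(A *\<^sub>v z)$k\<bar> \<le> 1" unfolding Az x_def by (auto simp: sgn_real_def)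
  from sdd_bound[OF A dp d zc this i] have zb: "\<bar>z$i\<bar> \<le> 1/\<delta>" .
  have "z$i = (\<Sum>j<n. \<bar>B $$ (i,j)\<bar>)"
    unfolding z_def using Bc i xc
    by (auto simp: scalar_prod_def lessThan_atLeast0 x_def abs_sgn intro!: sum.cong)
  thus ?thesis using zb B_def by simp
qed

lemma norm_inf_smult_le:
  fixes B :: "real mat"
  assumes B: "B \<in> carrier_mat n n" and n: "0 < n"
    and K: "\<forall>i<n. (\<Sum>j<n. \<bar>B $$ (i,j)\<bar>) \<le> K"
  shows "norm_inf (c \<cdot>\<^sub>m B) \<le> \<bar>c\<bar> * K"
  unfolding norm_inf_def
proof (subst Max_le_iff)
  show "finite ((\<lambda>i. \<Sum>j<dim_col (c \<cdot>\<^sub>m B). \<bar>(c \<cdot>\<^sub>m B) $$ (i, j)\<bar>) ` {..<dim_row (c \<cdot>\<^sub>m B)})" by simp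
  show "(\<lambda>i. \<Sum>j<dim_col (c \<cdot>\<^sub>m B). \<bar>(c \<cdot>\<^sub>m B) $$ (i, j)\<bar>) ` {..<dim_row (c \<cdot>\<^sub>m B)} \<noteq> {}"
    using B n by auto
  show "\<forall>a\<in>(\<lambda>i. \<Sum>j<dim_col (c \<cdot>\<^sub>m B). \<bar>(c \<cdot>\<^sub>m B) $$ (i, j)\<bar>) ` {..<dim_row (c \<cdot>\<^sub>m B)}. a \<le> \<bar>c\<bar> * K"
  proof
    fix a assume "a \<in> (\<lambda>i. \<Sum>j<dim_col (c \<cdot>\<^sub>m B). \<bar>(c \<cdot>\<^sub>m B) $$ (i, j)\<bar>) ` {..<dim_row (c \<cdot>\<^sub>m B)}"
    then obtain i where i: "i < n" and a: "a = (\<Sum>j<n. \<bar>(c \<cdot>\<^sub>m B) $$ (i, j)\<bar>)" using B by auto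
    have "a = \<bar>c\<bar> * (\<Sum>j<n. \<bar>B $$ (i,j)\<bar>)" unfolding a using B i
      by (simp add: abs_mult sum_distrib_left)
    also have "\<dots> \<le> \<bar>c\<bar> * K" using K i by (simp add: mult_left_mono)
    finally show "a \<le> \<bar>c\<bar> * K" .
  qed
qed


lemma tridiag_dd:
  fixes a b \<delta> :: real
  assumes "\<delta> \<le> a - 2 * \<bar>b\<bar>"
  shows "\<forall>i<n. \<delta> \<le> \<bar>tridiag_toeplitz n a b $$(i,i)\<bar>
            - (\<Sum>j\<in>{..<n}-{i}. \<bar>tridiag_toeplitz n a b $$(i,j)\<bar>)"
proof (intro allI impI)
  fix i assume i: "i < n"
  let ?T = "tridiag_toeplitz n a b"
  have "(\<Sum>j\<in>{..<n}-{i}. \<bar>?T $$(i,j)\<bar>)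
      \<le> (\<Sum>j\<in>{..<n}-{i}. (if j = i+1 then \<bar>b\<bar> else 0) + (if j = i-1 then \<bar>b\<bar> else 0))"
    by (rule sum_mono) (use i in \<open>auto simp: tridiag_toeplitz_def\<close>)
  also have "\<dots> = (if i+1 \<in> {..<n}-{i} then \<bar>b\<bar> else 0) + (if i-1 \<in> {..<n}-{i} then \<bar>b\<bar> else 0)"
    by (simp add: sum.distrib sum.delta)
  also have "\<dots> \<le> 2 * \<bar>b\<bar>" by auto
  finally have s: "(\<Sum>j\<in>{..<n}-{i}. \<bar>?T $$(i,j)\<bar>) \<le> 2 * \<bar>b\<bar>" .
  have "?T $$ (i,i) = a" using i by (simp add: tridiag_toeplitz_def)
  thus "\<delta> \<le> \<bar>?T $$(i,i)\<bar> - (\<Sum>j\<in>{..<n}-{i}. \<bar>?T $$(i,j)\<bar>)" using s assms by linarith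
qed

lemma smult_smult_mat1: "(a::real) \<cdot>\<^sub>m (b \<cdot>\<^sub>m A) = (a*b) \<cdot>\<^sub>m A"
  by (rule eq_matI) auto

lemma one_smult_mat1: "(1::real) \<cdot>\<^sub>m A = A"
  by (rule eq_matI) auto

lemma Tcar: "tridiag_toeplitz n a b \<in> carrier_mat n n"
  by (simp add: tridiag_toeplitz_def)

lemma frac_id: fixes H h e :: real assumes "H>0" "h>0"
 shows "2*e/(h*(H+h)) + 2*e/(H*(H+h)) + 1/H = 2*e/(H*h) + 1/H"
proof -
  define S where "S = H + h"
  have p: "S > 0" using assms S_def by simp
  have "2*e/(h*S) + 2*e/(H*S) = 2*e*(H+h)/(H*h*S)"
    using assms p by (simp add: field_simps)
  also have "\<dots> = 2*e/(H*h)" using p S_def by simp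
  finally show ?thesis using S_def by simp
qed

lemma scalar_invertible:
  fixes c :: real
  assumes "c \<noteq> 0"
  shows "invertible_mat (c \<cdot>\<^sub>m 1\<^sub>m n)"
proof -
  have "(c \<cdot>\<^sub>m 1\<^sub>m n) * ((1/c) \<cdot>\<^sub>m 1\<^sub>m n) = 1\<^sub>m n"
    using assms by (simp add: mult_smult_distrib[of _ n n _ n] mult_smult_assoc_mat[of _ n n _ n] smult_smult_mat1 one_smult_mat1)
  moreover have "((1/c) \<cdot>\<^sub>m 1\<^sub>m n) * (c \<cdot>\<^sub>m 1\<^sub>m n) = 1\<^sub>m n"
    using assms by (simp add: mult_smult_distrib[of _ n n _ n] mult_smult_assoc_mat[of _ n n _ n] smult_smult_mat1 one_smult_mat1)
  ultimately show ?thesis unfolding invertible_mat_def inverts_mat_def square_mat.simps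
    by (intro conjI exI[of _ "(1/c) \<cdot>\<^sub>m 1\<^sub>m n"]) auto
qed

lemma block_bound:
  fixes A :: "real mat"
  assumes A: "A \<in> carrier_mat n n" and n: "0 < n" and dp: "\<delta> > 0"
    and d: "\<forall>i<n. \<delta> \<le> \<bar>A$$(i,i)\<bar> - (\<Sum>j\<in>{..<n}-{i}. \<bar>A$$(i,j)\<bar>)"
    and ed: "\<bar>e\<bar> + \<bar>f\<bar> \<le> \<delta>"
  shows "invertible_mat A"
    "norm_inf (mat_inv A * (e \<cdot>\<^sub>m 1\<^sub>m n)) + norm_inf (mat_inv A * (f \<cdot>\<^sub>m 1\<^sub>m n)) \<le> 1"
    "norm_inf ((e \<cdot>\<^sub>m 1\<^sub>m n) * mat_inv A) + norm_inf ((f \<cdot>\<^sub>m 1\<^sub>m n) * mat_inv A) \<le> 1"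
proof -
  show inv: "invertible_mat A" by (rule sdd_invertible[OF A dp d])
  have Bc: "mat_inv A \<in> carrier_mat n n" using mat_inv_props[OF A inv] by simp
  have K: "\<forall>i<n. (\<Sum>j<n. \<bar>mat_inv A $$ (i,j)\<bar>) \<le> 1/\<delta>"
    using sdd_inv_rowsum[OF A dp d] by auto
  have r: "mat_inv A * (c \<cdot>\<^sub>m 1\<^sub>m n) = c \<cdot>\<^sub>m mat_inv A" for c :: real
    using mult_smult_distrib[OF Bc, of "1\<^sub>m n" n c] Bc by simp
  have l: "(c \<cdot>\<^sub>m 1\<^sub>m n) * mat_inv A = c \<cdot>\<^sub>m mat_inv A" for c :: real
    using mult_smult_assoc_mat[of "1\<^sub>m n" n n "mat_inv A" n c] Bc by simp
  have nb: "norm_inf (c \<cdot>\<^sub>m mat_inv A) \<le> \<bar>c\<bar> * (1/\<delta>)" for c :: real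
    by (rule norm_inf_smult_le[OF Bc n K])
  have fin: "\<bar>e\<bar> * (1/\<delta>) + \<bar>f\<bar> * (1/\<delta>) \<le> 1"
    using ed dp by (simp add: field_simps)
  show "norm_inf (mat_inv A * (e \<cdot>\<^sub>m 1\<^sub>m n)) + norm_inf (mat_inv A * (f \<cdot>\<^sub>m 1\<^sub>m n)) \<le> 1"
    unfolding r using nb[of e] nb[of f] fin by linarith
  show "norm_inf ((e \<cdot>\<^sub>m 1\<^sub>m n) * mat_inv A) + norm_inf ((f \<cdot>\<^sub>m 1\<^sub>m n) * mat_inv A) \<le> 1"
    unfolding l using nb[of e] nb[of f] fin by linarith
qed


theorem lemma5p1:
  fixes \<epsilon> \<beta> :: real and M N :: nat
  assumes "\<epsilon> > 0" and "\<beta> \<ge> 0" and "M \<ge> 4" and "even M" and "N \<ge> 3"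
  shows "invertible_mat (blkA_H \<epsilon> \<beta> M N) \<and> invertible_mat (blkA \<epsilon> \<beta> M N)
       \<and> invertible_mat (blkA_h \<epsilon> \<beta> M N)
       \<and> invertible_mat (blkB_H \<epsilon> M N) \<and> invertible_mat (blkB \<epsilon> M N)
       \<and> invertible_mat (blkB_h \<epsilon> M N)
       \<and> invertible_mat (blkC_H \<epsilon> M N) \<and> invertible_mat (blkC \<epsilon> M N)
       \<and> invertible_mat (blkC_h \<epsilon> M N)
       \<and> norm_inf (mat_inv (blkA_H \<epsilon> \<beta> M N) * blkB_H \<epsilon> M N)
         + norm_inf (mat_inv (blkA_H \<epsilon> \<beta> M N) * blkC_H \<epsilon> M N) \<le> 1
       \<and> norm_inf (mat_inv (blkA \<epsilon> \<beta> M N) * blkB \<epsilon> M N)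
         + norm_inf (mat_inv (blkA \<epsilon> \<beta> M N) * blkC \<epsilon> M N) \<le> 1
       \<and> norm_inf (mat_inv (blkA_h \<epsilon> \<beta> M N) * blkB_h \<epsilon> M N)
         + norm_inf (mat_inv (blkA_h \<epsilon> \<beta> M N) * blkC_h \<epsilon> M N) \<le> 1
       \<and> norm_inf (blkB_H \<epsilon> M N * mat_inv (blkA_H \<epsilon> \<beta> M N))
         + norm_inf (blkC_H \<epsilon> M N * mat_inv (blkA_H \<epsilon> \<beta> M N)) \<le> 1
       \<and> norm_inf (blkB_h \<epsilon> M N * mat_inv (blkA_h \<epsilon> \<beta> M N))
         + norm_inf (blkC_h \<epsilon> M N * mat_inv (blkA_h \<epsilon> \<beta> M N)) \<le> 1"
proof -
  note ep = assms(1) and bt = assms(2)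
  define n where "n = N - 1"
  have n0: "0 < n" using assms(5) n_def by simp
  have Mr: "real M \<ge> 4" using assms(3) by simp
  have lnM: "ln (real M) > 0" using Mr by simp
  have tp: "tau_y \<epsilon> M > 0" unfolding tau_y_def using ep lnM by simp
  have tl: "tau_y \<epsilon> M \<le> 1/2" unfolding tau_y_def by simp
  define H where "H = H_y \<epsilon> M"
  define h where "h = h_y \<epsilon> M"
  define s where "s = \<epsilon> / (H_x N)^2"
  have Hp: "H > 0" unfolding H_def H_y_def using tl Mr by simp
  have hp: "h > 0" unfolding h_def h_y_def using tp Mr by simp
  have sp: "s \<ge> 0" unfolding s_def using ep by simp
  have abs_s: "\<bar>- \<epsilon> / (H_x N)^2\<bar> = s" unfolding s_def using ep by simp
  have bH: "invertible_mat (blkA_H \<epsilon> \<beta> M N) \<and>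
    norm_inf (mat_inv (blkA_H \<epsilon> \<beta> M N) * blkB_H \<epsilon> M N) + norm_inf (mat_inv (blkA_H \<epsilon> \<beta> M N) * blkC_H \<epsilon> M N) \<le> 1 \<and>
    norm_inf (blkB_H \<epsilon> M N * mat_inv (blkA_H \<epsilon> \<beta> M N)) + norm_inf (blkC_H \<epsilon> M N * mat_inv (blkA_H \<epsilon> \<beta> M N)) \<le> 1"
  proof -
    define \<delta> where "\<delta> = 2*\<epsilon>/H^2 + 1/H + \<beta>"
    have dp: "\<delta> > 0" unfolding \<delta>_def using ep bt Hp by (simp add: add_pos_nonneg)
    have da: "\<delta> \<le> aH \<epsilon> \<beta> M N - 2 * \<bar>- \<epsilon> / (H_x N)^2\<bar>"
      unfolding abs_s \<delta>_def aH_def s_def H_def by simp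
    have ed: "\<bar>eH \<epsilon> M\<bar> + \<bar>dH \<epsilon> M\<bar> \<le> \<delta>"
      proof -
      have a: "0 \<le> \<epsilon>/H^2" "0 < 1/H" using ep Hp by auto
      show ?thesis unfolding eH_def dH_def \<delta>_def H_def[symmetric] using a bt by (simp add: abs_if)
    qed
    note bb = block_bound[OF Tcar n0 dp tridiag_dd[OF da] ed]
    show ?thesis using bb unfolding blkA_H_def blkB_H_def blkC_H_def n_def
      by simp
  qed
  have bM: "invertible_mat (blkA \<epsilon> \<beta> M N) \<and>
    norm_inf (mat_inv (blkA \<epsilon> \<beta> M N) * blkB \<epsilon> M N) + norm_inf (mat_inv (blkA \<epsilon> \<beta> M N) * blkC \<epsilon> M N) \<le> 1"
  proof -
    define \<delta> where "\<delta> = 2*\<epsilon>/(H*h) + 1/H + \<beta>"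
    have dp: "\<delta> > 0" unfolding \<delta>_def using ep bt Hp hp by (simp add: add_pos_nonneg)
    have da: "\<delta> \<le> aa \<epsilon> \<beta> M N - 2 * \<bar>- \<epsilon> / (H_x N)^2\<bar>"
      unfolding abs_s \<delta>_def aa_def s_def H_def h_def by simp
    have "\<bar>ee \<epsilon> M\<bar> + \<bar>dd \<epsilon> M\<bar> = 2*\<epsilon>/(h*(H+h)) + 2*\<epsilon>/(H*(H+h)) + 1/H"
    proof -
      have a: "0 \<le> 2*\<epsilon>/(H*(H+h))" "0 < 1/H" "0 \<le> 2*\<epsilon>/(h*(H+h))" using ep Hp hp by auto
      have e1: "ee \<epsilon> M = - (2*\<epsilon>/(h*(H+h)))" unfolding ee_def H_def h_def by simp
      have e2: "dd \<epsilon> M = - (2*\<epsilon>/(H*(H+h)) + 1/H)" unfolding dd_def H_def h_def by simp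
      have "\<bar>ee \<epsilon> M\<bar> = 2*\<epsilon>/(h*(H+h))" unfolding e1 using a(3) by (subst abs_of_nonpos) auto
      moreover have "\<bar>dd \<epsilon> M\<bar> = 2*\<epsilon>/(H*(H+h)) + 1/H" unfolding e2 using a(1,2) by arith
      ultimately show ?thesis by simp
    qed
    also have "\<dots> = 2*\<epsilon>/(H*h) + 1/H" using frac_id[OF Hp hp, of \<epsilon>] by simp
    finally have ed: "\<bar>ee \<epsilon> M\<bar> + \<bar>dd \<epsilon> M\<bar> \<le> \<delta>" unfolding \<delta>_def using bt by simp
    note bb = block_bound[OF Tcar n0 dp tridiag_dd[OF da] ed]
    show ?thesis using bb unfolding blkA_def blkB_def blkC_def n_def
      by simp
  qed
  have bh: "invertible_mat (blkA_h \<epsilon> \<beta> M N) \<and>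
    norm_inf (mat_inv (blkA_h \<epsilon> \<beta> M N) * blkB_h \<epsilon> M N) + norm_inf (mat_inv (blkA_h \<epsilon> \<beta> M N) * blkC_h \<epsilon> M N) \<le> 1 \<and>
    norm_inf (blkB_h \<epsilon> M N * mat_inv (blkA_h \<epsilon> \<beta> M N)) + norm_inf (blkC_h \<epsilon> M N * mat_inv (blkA_h \<epsilon> \<beta> M N)) \<le> 1"
  proof -
    define \<delta> where "\<delta> = 2*\<epsilon>/h^2 + 1/h + \<beta>"
    have dp: "\<delta> > 0" unfolding \<delta>_def using ep bt hp by (simp add: add_pos_nonneg)
    have da: "\<delta> \<le> ah \<epsilon> \<beta> M N - 2 * \<bar>- \<epsilon> / (H_x N)^2\<bar>"
      unfolding abs_s \<delta>_def ah_def s_def h_def by simp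
    have ed: "\<bar>eh \<epsilon> M\<bar> + \<bar>dh \<epsilon> M\<bar> \<le> \<delta>"
      proof -
      have a: "0 \<le> \<epsilon>/h^2" "0 < 1/h" using ep hp by auto
      show ?thesis unfolding eh_def dh_def \<delta>_def h_def[symmetric] using a bt by (simp add: abs_if)
    qed
    note bb = block_bound[OF Tcar n0 dp tridiag_dd[OF da] ed]
    show ?thesis using bb unfolding blkA_h_def blkB_h_def blkC_h_def n_def
      by simp
  qed
  have Hh: "H + h > 0" using Hp hp by simp
  have pf: "0 < \<epsilon>/H^2" "0 < 1/H" "0 < 2*\<epsilon>/(H*(H+h))" "0 < \<epsilon>/h^2" "0 < 1/h"
    using ep Hp hp Hh by auto
  have f1: "eH \<epsilon> M = -(\<epsilon>/H^2)" "dH \<epsilon> M = -(\<epsilon>/H^2) - 1/H"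
    "eh \<epsilon> M = -(\<epsilon>/h^2)" "dh \<epsilon> M = -(\<epsilon>/h^2) - 1/h"
    "dd \<epsilon> M = -(2*\<epsilon>/(H*(H+h))) - 1/H" "ee \<epsilon> M = -(2*\<epsilon>/(h*(H+h)))"
    unfolding eH_def ee_def eh_def dH_def dd_def dh_def H_def h_def by simp_all
  have pf2: "0 < 2*\<epsilon>/(h*(H+h))" using ep hp Hh by simp
  have neg: "eH \<epsilon> M < 0" "ee \<epsilon> M < 0" "eh \<epsilon> M < 0" "dH \<epsilon> M < 0" "dd \<epsilon> M < 0" "dh \<epsilon> M < 0"
    unfolding f1 using pf pf2 by linarith+
  have nz: "eH \<epsilon> M \<noteq> 0" "ee \<epsilon> M \<noteq> 0" "eh \<epsilon> M \<noteq> 0" "dH \<epsilon> M \<noteq> 0" "dd \<epsilon> M \<noteq> 0" "dh \<epsilon> M \<noteq> 0"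
    using neg by auto
  show ?thesis using bH bM bh scalar_invertible[OF nz(1)] scalar_invertible[OF nz(2)]
      scalar_invertible[OF nz(3)] scalar_invertible[OF nz(4)] scalar_invertible[OF nz(5)]
      scalar_invertible[OF nz(6)]
    unfolding blkB_H_def blkB_def blkB_h_def blkC_H_def blkC_def blkC_h_def by blast
qed

end
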